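(* Let $R$ be a ring with identity and $a,b,c,\alpha\in R$ such that $a$ has a $(b,c)$-inverse $a^\otimes$. The following are equivalent: (i) $\alpha$ is left $(b,c)$-invertible; (ii) $\alpha$ is right annihilator $(b,c)$-invertible; (iii) $1+(\alpha-a)a^\otimes$ is left invertible; (iv) $1+a^\otimes(\alpha-a)$ is left invertible.
   Context: For $x\in R$: $xR=\{xr:r\in R\}$, $Rx=\{rx:r\in R\}$, $x^\circ=\{r: xr=0\}$. $a$ is $(b,c)$-invertible if there is $y\in R$ with $y\in (bRy)\cap(yRc)$, $yab=b$, $cay=c$; such $y$ is unique, denoted $a^\otimes$. $\alpha$ is left $(b,c)$-invertible if there is $y$ with $Ry\subseteq Rc$ and $y\alpha b=b$; right annihilator $(b,c)$-invertible if there is $y$ with $c^\circ\subseteq y^\circ$ and $y\alpha b=b$. *)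

theory Defs
  imports Main
begin

definition lmul_set :: "'a::ring_1 \<Rightarrow> 'a \<Rightarrow> 'a set" where
  "lmul_set x z = {x * r * z | r. True}"

definition left_ideal :: "'a::ring_1 \<Rightarrow> 'a set" where
  "left_ideal x = {r * x | r. True}"

definition rann :: "'a::ring_1 \<Rightarrow> 'a set" where
  "rann x = {r. x * r = 0}"

definition is_bc_inverse :: "'a::ring_1 \<Rightarrow> 'a \<Rightarrow> 'a \<Rightarrow> 'a \<Rightarrow> bool" where
  "is_bc_inverse a b c y \<longleftrightarrow>
     y \<in> lmul_set b y \<and> y \<in> lmul_set y c \<and> y * a * b = b \<and> c * a * y = c"

definition bc_invertible :: "'a::ring_1 \<Rightarrow> 'a \<Rightarrow> 'a \<Rightarrow> bool" where
  "bc_invertible a b c \<longleftrightarrow> (\<exists>y. is_bc_inverse a b c y)"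

definition bc_inverse :: "'a::ring_1 \<Rightarrow> 'a \<Rightarrow> 'a \<Rightarrow> 'a" where
  "bc_inverse a b c = (THE y. is_bc_inverse a b c y)"

definition left_bc_invertible :: "'a::ring_1 \<Rightarrow> 'a \<Rightarrow> 'a \<Rightarrow> bool" where
  "left_bc_invertible \<alpha> b c \<longleftrightarrow>
     (\<exists>y. left_ideal y \<subseteq> left_ideal c \<and> y * \<alpha> * b = b)"

definition rann_bc_invertible :: "'a::ring_1 \<Rightarrow> 'a \<Rightarrow> 'a \<Rightarrow> bool" where
  "rann_bc_invertible \<alpha> b c \<longleftrightarrow>
     (\<exists>y. rann c \<subseteq> rann y \<and> y * \<alpha> * b = b)"

definition left_invertible :: "'a::ring_1 \<Rightarrow> bool" where
  "left_invertible x \<longleftrightarrow> (\<exists>z. z * x = 1)"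

end

theory Submission
  imports Defs
begin

lemma bc_unique:
  fixes a b c :: "'a::ring_1"
  assumes "is_bc_inverse a b c y1" "is_bc_inverse a b c y2"
  shows "y1 = y2"
proof -
  from assms(1) obtain t where t: "y1 = y1 * t * c" and a1: "y1 * a * b = b"
    unfolding is_bc_inverse_def lmul_set_def by blast
  from assms(2) obtain s where s: "y2 = b * s * y2" and c2: "c * a * y2 = c"
    unfolding is_bc_inverse_def lmul_set_def by blast
  have "y1 * a * y2 = y1 * t * (c * a * y2)" by (subst t) (simp add: mult.assoc)
  hence e1: "y1 * a * y2 = y1" using c2 t by simp
  have "y1 * a * y2 = (y1 * a * b) * s * y2" by (subst s) (simp add: mult.assoc)
  hence "y1 * a * y2 = y2" using a1 s by metis
  with e1 show ?thesis by simp
qed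

lemma jac:
  fixes x y :: "'a::ring_1"
  assumes "left_invertible (1 + x * y)"
  shows "left_invertible (1 + y * x)"
proof -
  from assms obtain u where u: "u * (1 + x * y) = 1" unfolding left_invertible_def by blast
  have "(1 - y * u * x) * (1 + y * x) = 1 + y * x - y * (u * (1 + x * y)) * x"
    by (simp add: algebra_simps)
  also have "\<dots> = 1" using u by simp
  finally show ?thesis unfolding left_invertible_def by blast
qed

theorem theorem4p2:
  fixes a b c \<alpha> :: "'a::ring_1"
  assumes "bc_invertible a b c"
  shows "(left_bc_invertible \<alpha> b c \<longleftrightarrow> rann_bc_invertible \<alpha> b c)
    \<and> (rann_bc_invertible \<alpha> b c \<longleftrightarrow> left_invertible (1 + (\<alpha> - a) * bc_inverse a b c))
    \<and> (left_invertible (1 + (\<alpha> - a) * bc_inverse a b c)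
         \<longleftrightarrow> left_invertible (1 + bc_inverse a b c * (\<alpha> - a)))"
proof -
  from assms obtain y0 where y0: "is_bc_inverse a b c y0" unfolding bc_invertible_def by blast
  have yi: "is_bc_inverse a b c (bc_inverse a b c)"
    unfolding bc_inverse_def by (rule theI[of _ y0]) (use y0 bc_unique in blast)+
  define y where "y = bc_inverse a b c"
  from yi obtain s t where s: "y = b * s * y" and t: "y = y * t * c"
    and ab: "y * a * b = b" and ca: "c * a * y = c"
    unfolding is_bc_inverse_def lmul_set_def y_def by blast
  have yay: "y * a * y = y"
  proof -
    have "y * a * y = y * t * (c * a * y)" by (subst (1) t) (simp add: mult.assoc)
    thus ?thesis using ca t by simp
  qed
  have I_II: "left_bc_invertible \<alpha> b c \<longleftrightarrow> rann_bc_invertible \<alpha> b c"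
  proof
    assume "left_bc_invertible \<alpha> b c"
    then obtain z where z1: "left_ideal z \<subseteq> left_ideal c" and z2: "z * \<alpha> * b = b"
      unfolding left_bc_invertible_def by blast
    have "z \<in> left_ideal z" unfolding left_ideal_def by (metis (mono_tags) mem_Collect_eq mult_1_left)
    with z1 obtain w where w: "z = w * c" unfolding left_ideal_def by blast
    have "rann c \<subseteq> rann z" unfolding rann_def using w by (auto simp: mult.assoc)
    with z2 show "rann_bc_invertible \<alpha> b c" unfolding rann_bc_invertible_def by blast
  next
    assume "rann_bc_invertible \<alpha> b c"
    then obtain z where z1: "rann c \<subseteq> rann z" and z2: "z * \<alpha> * b = b"
      unfolding rann_bc_invertible_def by blast
    have "c * (1 - a * y) = 0" using ca by (simp add: algebra_simps mult.assoc)
    hence "z * (1 - a * y) = 0" using z1 unfolding rann_def by blast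
    hence "z = z * a * y" by (simp add: algebra_simps mult.assoc)
    also have "\<dots> = (z * a * y * t) * c" using t by (metis mult.assoc)
    finally have zc: "z = (z * a * y * t) * c" .
    have "left_ideal z \<subseteq> left_ideal c"
    proof
      fix x assume "x \<in> left_ideal z"
      then obtain r where "x = r * z" unfolding left_ideal_def by blast
      hence "x = (r * (z * a * y * t)) * c" using zc by (metis mult.assoc)
      thus "x \<in> left_ideal c" unfolding left_ideal_def by blast
    qed
    with z2 show "left_bc_invertible \<alpha> b c" unfolding left_bc_invertible_def by blast
  qed
  have III_IV: "left_invertible (1 + (\<alpha> - a) * y) \<longleftrightarrow> left_invertible (1 + y * (\<alpha> - a))"
    using jac by blast
  have I_III: "left_bc_invertible \<alpha> b c \<Longrightarrow> left_invertible (1 + (\<alpha> - a) * y)"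
  proof -
    assume "left_bc_invertible \<alpha> b c"
    hence "rann_bc_invertible \<alpha> b c" using I_II by blast
    then obtain z where z1: "rann c \<subseteq> rann z" and z2: "z * \<alpha> * b = b"
      unfolding rann_bc_invertible_def by blast
    have "c * (1 - a * y) = 0" using ca by (simp add: algebra_simps mult.assoc)
    hence "z * (1 - a * y) = 0" using z1 unfolding rann_def by blast
    hence zay: "z * a * y = z" by (simp add: algebra_simps mult.assoc)
    have zay2: "z * \<alpha> * y = y"
    proof -
      have "z * \<alpha> * y = (z * \<alpha> * b) * s * y" by (subst (1) s) (simp add: mult.assoc)
      thus ?thesis using z2 s by simp
    qed
    have ayay: "a * y * a * y = a * y" using yay by (metis mult.assoc)
    define u where "u = (1 - a * y) + a * z - (1 - a * y) * \<alpha> * z"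
    have h1: "z * (1 + (\<alpha> - a) * y) = y"
      using zay zay2 by (simp add: algebra_simps mult.assoc)
    have "u * (1 + (\<alpha> - a) * y) = (1 - a * y) * (1 + (\<alpha> - a) * y)
        + a * (z * (1 + (\<alpha> - a) * y)) - (1 - a * y) * \<alpha> * (z * (1 + (\<alpha> - a) * y))"
      unfolding u_def by (simp add: algebra_simps)
    also have "\<dots> = (1 - a * y) * (1 + (\<alpha> - a) * y) + a * y - (1 - a * y) * \<alpha> * y"
      using h1 by simp
    also have "\<dots> = 1" using ayay by (simp add: algebra_simps)
    finally show ?thesis unfolding left_invertible_def by blast
  qed
  have IV_I: "left_invertible (1 + y * (\<alpha> - a)) \<Longrightarrow> left_bc_invertible \<alpha> b c"
  proof -
    assume "left_invertible (1 + y * (\<alpha> - a))"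
    then obtain v where v: "v * (1 + y * (\<alpha> - a)) = 1" unfolding left_invertible_def by blast
    have "(1 + y * (\<alpha> - a)) * b = y * \<alpha> * b" using ab by (simp add: algebra_simps)
    hence "b = v * y * \<alpha> * b" using v by (metis mult.assoc mult_1_left)
    moreover have "left_ideal (v * y) \<subseteq> left_ideal c"
    proof
      fix x assume "x \<in> left_ideal (v * y)"
      then obtain r where "x = r * (v * y)" unfolding left_ideal_def by blast
      hence "x = (r * v * y * t) * c" using t by (metis mult.assoc)
      thus "x \<in> left_ideal c" unfolding left_ideal_def by blast
    qed
    ultimately show ?thesis unfolding left_bc_invertible_def by metis
  qed
  show ?thesis unfolding y_def[symmetric] using I_II III_IV I_III IV_I by blast
qed

end
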